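(* Let $T,\Omega\subseteq\mathbb{R}$ be measurable with $0<|T|\,|\Omega|<\infty$, and let $f\in L^1(\mathbb{R})$ with $\widehat f\in L^1(\mathbb{R})$, $f\ne0$. Suppose $f$ is $\varepsilon_T$-concentrated on $T$ and $\widehat f$ is $\varepsilon_\Omega$-concentrated on $\Omega$, with $0\le\varepsilon_T,\varepsilon_\Omega\le1$, $\varepsilon_T+\varepsilon_\Omega\le1$. Then \[ \Delta f\,\Delta\widehat f\ge\frac{(1-\varepsilon_T^2)(1-\varepsilon_\Omega^2)}{4\pi^2|T|\,|\Omega|}\,\|f\|_2^2, \] where $\Delta f=\big(\int_{\mathbb{R}}|t|^2|f(t)|^2dt\big)^{1/2}$ and $\Delta\widehat f=\big(\int_{\mathbb{R}}|\omega|^2|\widehat f(\omega)|^2d\omega\big)^{1/2}$.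
   Context: Fourier transform $\widehat f(\omega)=\int e^{-2\pi i x\omega}f(x)\,dx$; $|\cdot|$ is Lebesgue measure. For $\varepsilon\ge0$, $f\in L^2(\mathbb{R})$ is $\varepsilon$-concentrated on a measurable set $U$ if $\big(\int_{\mathbb{R}\setminus U}|f|^2\big)^{1/2}\le\varepsilon\|f\|_2$. *)

theory Defs
  imports "HOL-Analysis.Analysis"
begin

definition fourier :: "(real \<Rightarrow> complex) \<Rightarrow> real \<Rightarrow> complex" where
  "fourier f \<omega> = integral\<^sup>L lebesgue (\<lambda>x. cis (- 2 * pi * x * \<omega>) * f x)"

definition L2_norm_sq :: "(real \<Rightarrow> complex) \<Rightarrow> ennreal" where
  "L2_norm_sq f = (\<integral>\<^sup>+ x. ennreal ((cmod (f x))\<^sup>2) \<partial>lebesgue)"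

text \<open>epsilon-concentration on U: (int_{R\U} |f|^2)^(1/2) <= eps * ||f||_2,
  written equivalently (eps >= 0) in squared form.\<close>
definition eps_concentrated :: "real \<Rightarrow> real set \<Rightarrow> (real \<Rightarrow> complex) \<Rightarrow> bool" where
  "eps_concentrated \<epsilon> U f \<longleftrightarrow> \<epsilon> \<ge> 0 \<and>
     (\<integral>\<^sup>+ x. indicator (UNIV - U) x * ennreal ((cmod (f x))\<^sup>2) \<partial>lebesgue)
       \<le> ennreal (\<epsilon>\<^sup>2) * L2_norm_sq f"

definition dispersion_sq :: "(real \<Rightarrow> complex) \<Rightarrow> ennreal" where
  "dispersion_sq f = (\<integral>\<^sup>+ t. ennreal (\<bar>t\<bar>\<^sup>2 * (cmod (f t))\<^sup>2) \<partial>lebesgue)"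

end

theory Submission
  imports Defs "HOL-Probability.Probability"
begin


lemma gauss_char_lborel:
  "(\<integral>x. std_normal_density x *\<^sub>R cis (t * x) \<partial>lborel) = complex_of_real (exp (- (t^2) / 2))"
proof -
  have "char std_normal_distribution t = complex_of_real (exp (- (t^2) / 2))"
    by (simp add: char_std_normal_distribution)
  moreover have "char std_normal_distribution t = (\<integral>x. std_normal_density x *\<^sub>R cis (t * x) \<partial>lborel)"
    unfolding char_def
    by (subst integral_density) (auto simp: normal_density_nonneg cis_conv_exp)
  ultimately show ?thesis by simp
qed

lemma gauss_ft_gen:
  "(\<integral>x. cis (w * x) * complex_of_real (exp (- pi * x^2)) \<partial>lborel) = complex_of_real (exp (- (w^2) / (4*pi)))"
proof -
  define c where "c = sqrt (2*pi)"
  have c0: "c > 0" unfolding c_def by simp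
  have cc: "c^2 = 2*pi" unfolding c_def by simp
  have "(\<integral>x. std_normal_density x *\<^sub>R cis ((w/c) * x) \<partial>lborel)
      = \<bar>c\<bar> *\<^sub>R (\<integral>x. std_normal_density (0 + c*x) *\<^sub>R cis ((w/c) * (0 + c*x)) \<partial>lborel)"
    using c0 by (intro lborel_integral_real_affine) simp
  also have "(\<lambda>x. std_normal_density (0 + c*x) *\<^sub>R cis ((w/c) * (0 + c*x))) =
     (\<lambda>x. (1/c) *\<^sub>R (cis (w * x) * complex_of_real (exp (- pi * x^2))))"
  proof
    fix x
    have "(c*x)^2/2 = pi * x^2" using cc by (simp add: power_mult_distrib)
    then show "std_normal_density (0 + c*x) *\<^sub>R cis ((w/c) * (0 + c*x)) =
       (1/c) *\<^sub>R (cis (w * x) * complex_of_real (exp (- pi * x^2)))"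
      using c0 unfolding std_normal_density_def c_def[symmetric]
      by (simp add: scaleR_conv_of_real field_simps)
  qed
  also have "\<bar>c\<bar> *\<^sub>R (\<integral>x. (1/c) *\<^sub>R (cis (w * x) * complex_of_real (exp (- pi * x^2))) \<partial>lborel)
     = (\<integral>x. cis (w * x) * complex_of_real (exp (- pi * x^2)) \<partial>lborel)"
    using c0 by simp
  finally have "(\<integral>x. cis (w * x) * complex_of_real (exp (- pi * x^2)) \<partial>lborel) = complex_of_real (exp (- ((w/c)^2) / 2))"
    using gauss_char_lborel[of "w/c"] by simp
  also have "complex_of_real (exp (- ((w/c)^2) / 2)) = complex_of_real (exp (- (w^2) / (4*pi)))"
    using cc by (simp add: power_divide)
  finally show ?thesis .
qed

lemma gauss_integrable: "integrable lborel (\<lambda>x. exp (- pi * x^2))"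
proof -
  define c where "c = sqrt (2*pi)"
  have c0: "c > 0" unfolding c_def by simp
  have cc: "c^2 = 2*pi" unfolding c_def by simp
  have i0: "integrable lborel std_normal_density"
    using integrable_std_normal_moment[of 0] by simp
  have "integrable lborel (\<lambda>x. std_normal_density (0 + c*x))"
    using lborel_integrable_real_affine[OF i0, of c 0] c0 by simp
  then have int2: "integrable lborel (\<lambda>x. c * std_normal_density (0 + c*x))"
    by (intro integrable_mult_right)
  have eq: "(\<lambda>x. c * std_normal_density (0 + c*x)) = (\<lambda>x. exp (- pi * x^2))"
  proof
    fix x
    have "(c*x)^2/2 = pi * x^2" using cc by (simp add: power_mult_distrib)
    then show "c * std_normal_density (0 + c*x) = exp (- pi * x^2)"
      using c0 unfolding std_normal_density_def c_def[symmetric] by simp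
  qed
  show ?thesis by (subst eq[symmetric]) (rule int2)
qed

lemma gauss_ft_shift:
  "(\<integral>w. cis (- 2*pi*y*w) * complex_of_real (exp (- pi * (w - xi)^2)) \<partial>lborel)
     = cis (- 2*pi*y*xi) * complex_of_real (exp (- pi * y^2))"
proof -
  have "(\<integral>w. cis (- 2*pi*y*w) * complex_of_real (exp (- pi * (w - xi)^2)) \<partial>lborel)
     = \<bar>1\<bar> *\<^sub>R (\<integral>u. cis (- 2*pi*y*(xi + 1*u)) * complex_of_real (exp (- pi * ((xi + 1*u) - xi)^2)) \<partial>lborel)"
    by (rule lborel_integral_real_affine) simp
  also have "\<dots> = (\<integral>u. cis (- 2*pi*y*xi) * (cis ((-2*pi*y) * u) * complex_of_real (exp (- pi * u^2))) \<partial>lborel)"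
  proof -
    have "\<And>u. cis (- 2*pi*y*(xi + 1*u)) = cis (- 2*pi*y*xi) * cis ((-2*pi*y) * u)"
      by (simp add: cis_mult algebra_simps)
    then show ?thesis by (simp add: mult.assoc)
  qed
  also have "\<dots> = cis (- 2*pi*y*xi) * (\<integral>u. cis ((-2*pi*y) * u) * complex_of_real (exp (- pi * u^2)) \<partial>lborel)"
    by (rule integral_mult_right_zero)
  also have "\<dots> = cis (- 2*pi*y*xi) * complex_of_real (exp (- pi * y^2))"
  proof -
    have "(-2*pi*y)^2 / (4*pi) = pi * y^2" by (simp add: power2_eq_square field_simps)
    then show ?thesis by (simp only: gauss_ft_gen) simp
  qed
  finally show ?thesis .
qed

lemma gauss_ft_mod:
  "(\<integral>t. cis (2*pi*w*t) * (complex_of_real (exp (- pi * t^2)) * cis (- 2*pi*xi*t)) \<partial>lborel)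
     = complex_of_real (exp (- pi * (w - xi)^2))"
proof -
  have pw: "\<And>t. cis (2*pi*w*t) * (complex_of_real (exp (- pi * t^2)) * cis (- 2*pi*xi*t))
        = cis ((2*pi*(w-xi)) * t) * complex_of_real (exp (- pi * t^2))"
    by (simp add: cis_mult algebra_simps)
  have "(\<integral>t. cis (2*pi*w*t) * (complex_of_real (exp (- pi * t^2)) * cis (- 2*pi*xi*t)) \<partial>lborel)
     = (\<integral>t. cis ((2*pi*(w-xi)) * t) * complex_of_real (exp (- pi * t^2)) \<partial>lborel)" by (simp only: pw)
  also have "\<dots> = complex_of_real (exp (- ((2*pi*(w-xi))^2) / (4*pi)))" by (rule gauss_ft_gen)
  also have "complex_of_real (exp (- ((2*pi*(w-xi))^2) / (4*pi))) = complex_of_real (exp (- pi * (w - xi)^2))"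
    by (simp add: power2_eq_square field_simps)
  finally show ?thesis .
qed

lemma integrable_prod_lborel:
  fixes a b :: "real \<Rightarrow> real"
  assumes a: "integrable lborel a" and b: "integrable lborel b"
  shows "integrable (lborel \<Otimes>\<^sub>M lborel) (\<lambda>z. a (fst z) * b (snd z))"
proof (rule integrableI_bounded)
  have [measurable]: "a \<in> borel_measurable borel" "b \<in> borel_measurable borel"
    using borel_measurable_integrable[OF a] borel_measurable_integrable[OF b] by simp_all
  show "(\<lambda>z. a (fst z) * b (snd z)) \<in> borel_measurable (lborel \<Otimes>\<^sub>M lborel)" by measurable
  have eq: "integral\<^sup>N (lborel \<Otimes>\<^sub>M lborel) (\<lambda>z. ennreal (norm (a (fst z) * b (snd z))))
      = (\<integral>\<^sup>+x. \<integral>\<^sup>+y. ennreal (norm (a (fst (x,y)) * b (snd (x,y)))) \<partial>lborel \<partial>lborel)"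
  proof -
    have m: "(\<lambda>z. ennreal (norm (a (fst z) * b (snd z)))) \<in> borel_measurable (lborel \<Otimes>\<^sub>M lborel)" by measurable
    show ?thesis using lborel.nn_integral_fst[OF m] by simp
  qed
  have "(\<integral>\<^sup>+x. \<integral>\<^sup>+y. ennreal (norm (a (fst (x,y)) * b (snd (x,y)))) \<partial>lborel \<partial>lborel)
      = (\<integral>\<^sup>+x. ennreal (norm (a x)) * (\<integral>\<^sup>+y. ennreal (norm (b y)) \<partial>lborel) \<partial>lborel)"
    by (simp add: abs_mult ennreal_mult nn_integral_cmult)
  also have "\<dots> = (\<integral>\<^sup>+x. ennreal (norm (a x)) \<partial>lborel) * (\<integral>\<^sup>+y. ennreal (norm (b y)) \<partial>lborel)"
    by (simp add: nn_integral_multc)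
  also have "\<dots> < \<infinity>" using a b by (simp add: integrable_iff_bounded ennreal_mult_less_top)
  finally show "integral\<^sup>N (lborel \<Otimes>\<^sub>M lborel) (\<lambda>z. ennreal (norm (a (fst z) * b (snd z)))) < \<infinity>"
    using eq by simp
qed

lemma fubini_swap_bound:
  fixes K :: "real \<Rightarrow> real \<Rightarrow> complex" and a b :: "real \<Rightarrow> real"
  assumes Km: "(\<lambda>z. K (fst z) (snd z)) \<in> borel_measurable (lborel \<Otimes>\<^sub>M lborel)"
  and a: "integrable lborel a" and b: "integrable lborel b"
  and bound: "\<And>x y. norm (K x y) \<le> a x * b y"
  shows "(\<integral>y. (\<integral>x. K x y \<partial>lborel) \<partial>lborel) = (\<integral>x. (\<integral>y. K x y \<partial>lborel) \<partial>lborel)"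
proof (rule lborel_pair.Fubini_integral)
  show "integrable (lborel \<Otimes>\<^sub>M lborel) (case_prod K)"
  proof (rule Bochner_Integration.integrable_bound[OF integrable_prod_lborel[OF a b]])
    show "case_prod K \<in> borel_measurable (lborel \<Otimes>\<^sub>M lborel)" using Km by (simp add: split_beta')
    show "AE z in lborel \<Otimes>\<^sub>M lborel. norm (case_prod K z) \<le> norm (a (fst z) * b (snd z))"
    proof (rule AE_I2)
      fix z :: "real \<times> real"
      have "norm (case_prod K z) \<le> a (fst z) * b (snd z)" using bound[of "fst z" "snd z"] by (simp add: split_beta)
      also have "\<dots> \<le> norm (a (fst z) * b (snd z))" by simp
      finally show "norm (case_prod K z) \<le> norm (a (fst z) * b (snd z))" .
    qed
  qed
qed

lemma integrable_cis_mult: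
  fixes g :: "real \<Rightarrow> complex"
  assumes g: "integrable M g" and h[measurable]: "h \<in> borel_measurable M"
  shows "integrable M (\<lambda>x. cis (h x) * g x)"
proof (rule Bochner_Integration.integrable_bound[OF g])
  have [measurable]: "g \<in> borel_measurable M" using borel_measurable_integrable[OF g] .
  have e: "(\<lambda>x. cis (h x) * g x) = (\<lambda>x. exp (\<i> * complex_of_real (h x)) * g x)" by (simp add: cis_conv_exp)
  show "(\<lambda>x. cis (h x) * g x) \<in> borel_measurable M" unfolding e by measurable
  show "AE x in M. norm (cis (h x) * g x) \<le> norm (g x)" by (simp add: norm_mult)
qed

lemma ft_unique_real:
  fixes r :: "real \<Rightarrow> real"
  assumes r: "integrable lborel r"
  and z: "\<And>t. (\<integral>x. cis (t * x) * complex_of_real (r x) \<partial>lborel) = 0"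
  shows "AE x in lborel. r x = 0"
proof -
  have rm[measurable]: "r \<in> borel_measurable borel" using borel_measurable_integrable[OF r] by simp
  define p where "p x = max (r x) 0" for x
  define n where "n x = max (- r x) 0" for x
  have pm[measurable]: "p \<in> borel_measurable borel" "n \<in> borel_measurable borel" unfolding p_def n_def by measurable
  have pint: "integrable lborel p"
    by (rule Bochner_Integration.integrable_bound[OF r]) (auto simp: p_def)
  have nint: "integrable lborel n"
    by (rule Bochner_Integration.integrable_bound[OF r]) (auto simp: n_def)
  have pn0: "p x \<ge> 0" "n x \<ge> 0" for x by (auto simp: p_def n_def)
  have rpn: "r x = p x - n x" for x by (simp add: p_def n_def max_def)
  have "(\<integral>x. cis (0 * x) * complex_of_real (r x) \<partial>lborel) = 0" by (rule z)
  hence int0: "(\<integral>x. r x \<partial>lborel) = 0" by simp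
  have "(\<integral>x. r x \<partial>lborel) = (\<integral>x. p x \<partial>lborel) - (\<integral>x. n x \<partial>lborel)"
    unfolding rpn by (rule Bochner_Integration.integral_diff[OF pint nint])
  hence eqpn: "(\<integral>x. n x \<partial>lborel) = (\<integral>x. p x \<partial>lborel)" using int0 by simp
  define c where "c = (\<integral>x. p x \<partial>lborel)"
  have c0: "c \<ge> 0" unfolding c_def using pn0 by (simp add: integral_nonneg)
  have "AE x in lborel. p x = n x"
  proof (cases "c = 0")
    case True
    have "AE x in lborel. p x = 0" using integral_nonneg_eq_0_iff_AE[OF pint] True pn0 unfolding c_def by simp
    moreover have "AE x in lborel. n x = 0" using integral_nonneg_eq_0_iff_AE[OF nint] True pn0 eqpn unfolding c_def by simp
    ultimately show ?thesis by eventually_elim simp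
  next
    case False
    hence cpos: "c > 0" using c0 by simp
    have rd: "real_distribution (density lborel (\<lambda>x. ennreal (q x / c)))"
      if qi: "integrable lborel q" and q0: "\<And>x. q x \<ge> 0" and qc: "(\<integral>x. q x \<partial>lborel) = c" for q
    proof -
      have qm[measurable]: "q \<in> borel_measurable borel" using borel_measurable_integrable[OF qi] by simp
      have "emeasure (density lborel (\<lambda>x. ennreal (q x / c))) UNIV = (\<integral>\<^sup>+x. ennreal (q x / c) \<partial>lborel)"
        by (simp add: emeasure_density)
      also have "\<dots> = ennreal (\<integral>x. q x / c \<partial>lborel)"
        using qi q0 cpos by (intro nn_integral_eq_integral) auto
      also have "\<dots> = 1" using qc cpos by simp
      finally have "emeasure (density lborel (\<lambda>x. ennreal (q x / c))) UNIV = 1" .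
      then have "prob_space (density lborel (\<lambda>x. ennreal (q x / c)))" by (intro prob_spaceI) simp
      then show ?thesis by (auto intro!: real_distribution.intro simp: real_distribution_axioms_def)
    qed
    have ch: "char (density lborel (\<lambda>x. ennreal (q x / c))) t = (\<integral>x. cis (t*x) * complex_of_real (q x) \<partial>lborel) / c"
      if qi: "integrable lborel q" and q0: "\<And>x. q x \<ge> 0" for q t
    proof -
      have qm[measurable]: "q \<in> borel_measurable borel" using borel_measurable_integrable[OF qi] by simp
      have "char (density lborel (\<lambda>x. ennreal (q x / c))) t = (\<integral>x. (q x / c) *\<^sub>R iexp (t * x) \<partial>lborel)"
        unfolding char_def using q0 cpos by (subst integral_density) auto
      also have "\<dots> = (\<integral>x. cis (t*x) * complex_of_real (q x) / c \<partial>lborel)"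
        by (intro Bochner_Integration.integral_cong refl) (simp add: scaleR_conv_of_real cis_conv_exp field_simps)
      also have "\<dots> = (\<integral>x. cis (t*x) * complex_of_real (q x) \<partial>lborel) / c"
        by (rule integral_divide_zero)
      finally show ?thesis .
    qed
    have cheq: "char (density lborel (\<lambda>x. ennreal (p x / c))) = char (density lborel (\<lambda>x. ennreal (n x / c)))"
    proof
      fix t
      have ip: "integrable lborel (\<lambda>x. cis (t*x) * complex_of_real (p x))"
        using pint by (intro integrable_cis_mult) auto
      have inn: "integrable lborel (\<lambda>x. cis (t*x) * complex_of_real (n x))"
        using nint by (intro integrable_cis_mult) auto
      have "(\<integral>x. cis (t*x) * complex_of_real (p x) \<partial>lborel) - (\<integral>x. cis (t*x) * complex_of_real (n x) \<partial>lborel)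
          = (\<integral>x. cis (t*x) * complex_of_real (p x) - cis (t*x) * complex_of_real (n x) \<partial>lborel)"
        by (rule Bochner_Integration.integral_diff[OF ip inn, symmetric])
      also have "\<dots> = (\<integral>x. cis (t*x) * complex_of_real (r x) \<partial>lborel)"
        by (simp add: rpn algebra_simps)
      also have "\<dots> = 0" by (rule z)
      finally show "char (density lborel (\<lambda>x. ennreal (p x / c))) t = char (density lborel (\<lambda>x. ennreal (n x / c))) t"
        using ch[OF pint pn0(1)] ch[OF nint pn0(2)] by simp
    qed
    have "density lborel (\<lambda>x. ennreal (p x / c)) = density lborel (\<lambda>x. ennreal (n x / c))"
      by (rule Levy_uniqueness[OF rd[OF pint pn0(1)] rd[OF nint pn0(2)] cheq]) (simp_all add: c_def eqpn)
    then have "AE x in lborel. ennreal (p x / c) = ennreal (n x / c)"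
      by (subst (asm) sigma_finite_measure.density_unique_iff[OF lborel.sigma_finite_measure_axioms]) auto
    then show ?thesis
    proof (rule eventually_mono)
      fix x assume "ennreal (p x / c) = ennreal (n x / c)"
      then have "p x / c = n x / c" using pn0[of x] cpos by (subst (asm) ennreal_inj) auto
      then show "p x = n x" using cpos by simp
    qed
  qed
  then show ?thesis by (rule eventually_mono) (simp add: p_def n_def max_def split: if_splits)
qed

lemma ft_unique:
  fixes g :: "real \<Rightarrow> complex"
  assumes g: "integrable lborel g" and z: "\<And>t. (\<integral>x. cis (t * x) * g x \<partial>lborel) = 0"
  shows "AE x in lborel. g x = 0"
proof -
  have re: "AE x in lborel. Re (h x) = 0"
    if h: "integrable lborel h" and hz: "\<And>t. (\<integral>x. cis (t * x) * h x \<partial>lborel) = 0" for h :: "real \<Rightarrow> complex"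
  proof (rule ft_unique_real)
    show "integrable lborel (\<lambda>x. Re (h x))" using h by simp
    fix t
    have hm[measurable]: "h \<in> borel_measurable borel" using borel_measurable_integrable[OF h] by simp
    have i1: "integrable lborel (\<lambda>x. cis (t * x) * h x)" using h by (intro integrable_cis_mult) auto
    have i2: "integrable lborel (\<lambda>x. cnj (cis ((-t) * x) * h x))" using h by (intro integrable_cnj integrable_cis_mult) auto
    have pw: "cis (t * x) * complex_of_real (Re (h x)) = (cis (t * x) * h x + cnj (cis ((-t) * x) * h x)) / 2" for x
    proof -
      have e0: "complex_of_real (Re (h x)) = (h x + cnj (h x)) / 2" by (simp add: complex_add_cnj)
      have e1: "cnj (cis ((-t) * x) * h x) = cis (t * x) * cnj (h x)" by (simp add: cis_cnj)
      show ?thesis unfolding e0 e1 by (simp add: field_simps)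
    qed
    have "(\<integral>x. cis (t * x) * complex_of_real (Re (h x)) \<partial>lborel)
       = (\<integral>x. (cis (t * x) * h x + cnj (cis ((-t) * x) * h x)) / 2 \<partial>lborel)" by (simp only: pw)
    also have "\<dots> = (\<integral>x. cis (t * x) * h x + cnj (cis ((-t) * x) * h x) \<partial>lborel) / 2"
      by (rule integral_divide_zero)
    also have "\<dots> = ((\<integral>x. cis (t * x) * h x \<partial>lborel) + (\<integral>x. cnj (cis ((-t) * x) * h x) \<partial>lborel)) / 2"
      by (subst Bochner_Integration.integral_add[OF i1 i2]) (rule refl)
    also have "\<dots> = ((\<integral>x. cis (t * x) * h x \<partial>lborel) + cnj (\<integral>x. cis ((-t) * x) * h x \<partial>lborel)) / 2"
      by (simp only: Bochner_Integration.integral_cnj)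
    also have "\<dots> = 0" using hz[of t] hz[of "-t"] by simp
    finally show "(\<integral>x. cis (t * x) * complex_of_real (Re (h x)) \<partial>lborel) = 0" .
  qed
  have a1: "AE x in lborel. Re (g x) = 0" by (rule re[OF g z])
  have a2: "AE x in lborel. Re (- \<i> * g x) = 0"
  proof (rule re)
    show "integrable lborel (\<lambda>x. - \<i> * g x)" using g by (intro integrable_mult_right)
    fix t
    have "(\<integral>x. cis (t * x) * (- \<i> * g x) \<partial>lborel) = - \<i> * (\<integral>x. cis (t * x) * g x \<partial>lborel)"
      by (simp add: mult.left_commute)
    then show "(\<integral>x. cis (t * x) * (- \<i> * g x) \<partial>lborel) = 0" using z[of t] by simp
  qed
  from a1 a2 show ?thesis by eventually_elim (simp add: complex_eq_iff)
qed



definition ftb :: "(real \<Rightarrow> complex) \<Rightarrow> real \<Rightarrow> complex" where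
  "ftb f w = (\<integral>x. cis (- 2 * pi * x * w) * f x \<partial>lborel)"

definition ift :: "(real \<Rightarrow> complex) \<Rightarrow> real \<Rightarrow> complex" where
  "ift F t = (\<integral>w. cis (2 * pi * w * t) * F w \<partial>lborel)"

lemma cnj_meas[measurable (raw)]:
  assumes [measurable]: "f \<in> borel_measurable M"
  shows "(\<lambda>x. cnj (f x)) \<in> borel_measurable M"
proof -
  have e: "(\<lambda>x. cnj (f x)) = (\<lambda>x. complex_of_real (Re (f x)) - \<i> * complex_of_real (Im (f x)))"
    by (simp add: fun_eq_iff complex_eq_iff)
  show ?thesis unfolding e by measurable
qed

lemma cis_meas[measurable]: "cis \<in> borel_measurable borel"
proof -
  have e: "cis = (\<lambda>x::real. exp (\<i> * complex_of_real x))" by (simp add: cis_conv_exp fun_eq_iff)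
  show ?thesis unfolding e by measurable
qed

lemma ftb_meas[measurable]:
  assumes [measurable]: "f \<in> borel_measurable borel"
  shows "ftb f \<in> borel_measurable borel"
proof -
  have "(\<lambda>w. \<integral>x. cis (- 2 * pi * x * w) * f x \<partial>lborel) \<in> borel_measurable borel"
    by (rule lborel.borel_measurable_lebesgue_integral) measurable
  then show ?thesis unfolding ftb_def[abs_def] .
qed

lemma ift_meas[measurable]:
  assumes [measurable]: "F \<in> borel_measurable borel"
  shows "ift F \<in> borel_measurable borel"
proof -
  have "(\<lambda>t. \<integral>w. cis (2 * pi * w * t) * F w \<partial>lborel) \<in> borel_measurable borel"
    by (rule lborel.borel_measurable_lebesgue_integral) measurable
  then show ?thesis unfolding ift_def[abs_def] .
qed

lemma ftb_bound:
  assumes "integrable lborel f"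
  shows "norm (ftb f w) \<le> (\<integral>x. norm (f x) \<partial>lborel)"
proof -
  have "norm (ftb f w) \<le> (\<integral>x. norm (cis (- 2 * pi * x * w) * f x) \<partial>lborel)"
    unfolding ftb_def by (rule integral_norm_bound)
  also have "\<dots> = (\<integral>x. norm (f x) \<partial>lborel)" by (simp add: norm_mult)
  finally show ?thesis .
qed

lemma ift_bound:
  assumes "integrable lborel F"
  shows "norm (ift F t) \<le> (\<integral>x. norm (F x) \<partial>lborel)"
proof -
  have "norm (ift F t) \<le> (\<integral>w. norm (cis (2 * pi * w * t) * F w) \<partial>lborel)"
    unfolding ift_def by (rule integral_norm_bound)
  also have "\<dots> = (\<integral>x. norm (F x) \<partial>lborel)" by (simp add: norm_mult)
  finally show ?thesis .
qed

lemma gauss_shift_integrable: "integrable lborel (\<lambda>w. exp (- pi * (w - xi)^2))"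
proof -
  have "integrable lborel (\<lambda>w. exp (- pi * ((- xi) + 1 * w)^2))"
    by (rule lborel_integrable_real_affine[OF gauss_integrable]) simp
  then show ?thesis by simp
qed

lemma inversion:
  fixes f :: "real \<Rightarrow> complex"
  assumes fi: "integrable lborel f" and Fi: "integrable lborel (ftb f)"
  shows "AE x in lborel. f x = ift (ftb f) x"
proof -
  have fm[measurable]: "f \<in> borel_measurable borel" using borel_measurable_integrable[OF fi] by simp
  define F where "F = ftb f"
  have Fm[measurable]: "F \<in> borel_measurable borel" unfolding F_def by measurable
  have Fi': "integrable lborel F" using Fi unfolding F_def .
  define h where "h = ift F"
  have hm[measurable]: "h \<in> borel_measurable borel" unfolding h_def by measurable
  define B where "B = (\<integral>w. norm (F w) \<partial>lborel)"
  have hb: "norm (h t) \<le> B" for t unfolding h_def B_def by (rule ift_bound[OF Fi'])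
  define G where "G t = exp (- pi * t^2)" for t
  have Gm[measurable]: "G \<in> borel_measurable borel" unfolding G_def by measurable
  have Gi: "integrable lborel G" unfolding G_def by (rule gauss_integrable)
  have G0: "G t > 0" for t unfolding G_def by simp
  have G1: "G t \<le> 1" for t unfolding G_def by simp
  have key: "(\<integral>t. cis (-2*pi*xi*t) * (h t * complex_of_real (G t)) \<partial>lborel)
      = (\<integral>t. cis (-2*pi*xi*t) * (f t * complex_of_real (G t)) \<partial>lborel)" for xi
  proof -
    have "(\<integral>t. cis (-2*pi*xi*t) * (h t * complex_of_real (G t)) \<partial>lborel)
        = (\<integral>t. (\<integral>w. cis (2*pi*w*t) * F w * (complex_of_real (G t) * cis (-2*pi*xi*t)) \<partial>lborel) \<partial>lborel)"
    proof (intro Bochner_Integration.integral_cong refl)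
      fix t
      have "(\<integral>w. cis (2*pi*w*t) * F w * (complex_of_real (G t) * cis (-2*pi*xi*t)) \<partial>lborel)
          = (\<integral>w. cis (2*pi*w*t) * F w \<partial>lborel) * (complex_of_real (G t) * cis (-2*pi*xi*t))"
        by (rule integral_mult_left_zero)
      then show "cis (-2*pi*xi*t) * (h t * complex_of_real (G t))
          = (\<integral>w. cis (2*pi*w*t) * F w * (complex_of_real (G t) * cis (-2*pi*xi*t)) \<partial>lborel)"
        unfolding h_def ift_def by (simp add: mult_ac)
    qed
    also have "\<dots> = (\<integral>w. (\<integral>t. cis (2*pi*w*t) * F w * (complex_of_real (G t) * cis (-2*pi*xi*t)) \<partial>lborel) \<partial>lborel)"
    proof (rule fubini_swap_bound[where a="\<lambda>w. norm (F w)" and b=G])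
      show "(\<lambda>z. cis (2*pi*(fst z)*(snd z)) * F (fst z) * (complex_of_real (G (snd z)) * cis (-2*pi*xi*(snd z))))
          \<in> borel_measurable (lborel \<Otimes>\<^sub>M lborel)" by measurable
      show "integrable lborel (\<lambda>w. norm (F w))" using Fi' by simp
      show "integrable lborel G" by (rule Gi)
      fix w t
      show "norm (cis (2*pi*w*t) * F w * (complex_of_real (G t) * cis (-2*pi*xi*t))) \<le> norm (F w) * G t"
        using G0[of t] by (simp add: norm_mult)
    qed
    also have "\<dots> = (\<integral>w. F w * complex_of_real (exp (- pi * (w - xi)^2)) \<partial>lborel)"
    proof (intro Bochner_Integration.integral_cong refl)
      fix w
      have "(\<integral>t. cis (2*pi*w*t) * F w * (complex_of_real (G t) * cis (-2*pi*xi*t)) \<partial>lborel)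
          = F w * (\<integral>t. cis (2*pi*w*t) * (complex_of_real (exp (- pi * t^2)) * cis (-2*pi*xi*t)) \<partial>lborel)"
      proof -
        have "(\<lambda>t. cis (2*pi*w*t) * F w * (complex_of_real (G t) * cis (-2*pi*xi*t)))
            = (\<lambda>t. F w * (cis (2*pi*w*t) * (complex_of_real (exp (- pi * t^2)) * cis (-2*pi*xi*t))))"
          unfolding G_def by (simp add: fun_eq_iff mult_ac)
        then show ?thesis by (simp only: integral_mult_right_zero)
      qed
      also have "\<dots> = F w * complex_of_real (exp (- pi * (w - xi)^2))"
        using gauss_ft_mod[of w xi] by simp
      finally show "(\<integral>t. cis (2*pi*w*t) * F w * (complex_of_real (G t) * cis (-2*pi*xi*t)) \<partial>lborel)
          = F w * complex_of_real (exp (- pi * (w - xi)^2))" .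
    qed
    also have "\<dots> = (\<integral>w. (\<integral>s. cis (- 2 * pi * s * w) * f s * complex_of_real (exp (- pi * (w - xi)^2)) \<partial>lborel) \<partial>lborel)"
      unfolding F_def ftb_def
      by (intro Bochner_Integration.integral_cong refl) (simp add: integral_mult_left_zero)
    also have "\<dots> = (\<integral>s. (\<integral>w. cis (- 2 * pi * s * w) * f s * complex_of_real (exp (- pi * (w - xi)^2)) \<partial>lborel) \<partial>lborel)"
    proof (rule fubini_swap_bound[where a="\<lambda>s. norm (f s)" and b="\<lambda>w. exp (- pi * (w - xi)^2)"])
      show "(\<lambda>z. cis (- 2 * pi * (fst z) * (snd z)) * f (fst z) * complex_of_real (exp (- pi * ((snd z) - xi)^2)))
          \<in> borel_measurable (lborel \<Otimes>\<^sub>M lborel)" by measurable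
      show "integrable lborel (\<lambda>s. norm (f s))" using fi by simp
      show "integrable lborel (\<lambda>w. exp (- pi * (w - xi)^2))" by (rule gauss_shift_integrable)
      fix s w
      show "norm (cis (- 2 * pi * s * w) * f s * complex_of_real (exp (- pi * (w - xi)^2))) \<le> norm (f s) * exp (- pi * (w - xi)^2)"
        by (simp add: norm_mult)
    qed
    also have "\<dots> = (\<integral>s. cis (-2*pi*xi* s) * (f s * complex_of_real (G s)) \<partial>lborel)"
    proof (intro Bochner_Integration.integral_cong refl)
      fix s
      have "(\<integral>w. cis (- 2 * pi * s * w) * f s * complex_of_real (exp (- pi * (w - xi)^2)) \<partial>lborel)
          = f s * (\<integral>w. cis (- 2*pi* s*w) * complex_of_real (exp (- pi * (w - xi)^2)) \<partial>lborel)"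
      proof -
        have "(\<lambda>w. cis (- 2 * pi * s * w) * f s * complex_of_real (exp (- pi * (w - xi)^2)))
            = (\<lambda>w. f s * (cis (- 2*pi* s*w) * complex_of_real (exp (- pi * (w - xi)^2))))"
          by (simp add: fun_eq_iff mult_ac)
        then show ?thesis by (simp only: integral_mult_right_zero)
      qed
      also have "\<dots> = f s * (cis (- 2*pi* s*xi) * complex_of_real (exp (- pi * s^2)))"
        by (simp only: gauss_ft_shift)
      also have "\<dots> = cis (-2*pi*xi* s) * (f s * complex_of_real (G s))"
        unfolding G_def by (simp add: mult_ac)
      finally show "(\<integral>w. cis (- 2 * pi * s * w) * f s * complex_of_real (exp (- pi * (w - xi)^2)) \<partial>lborel)
          = cis (-2*pi*xi* s) * (f s * complex_of_real (G s))" .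
    qed
    finally show ?thesis .
  qed
  define u where "u t = (f t - h t) * complex_of_real (G t)" for t
  have um[measurable]: "u \<in> borel_measurable borel" unfolding u_def by measurable
  have fGi: "integrable lborel (\<lambda>t. f t * complex_of_real (G t))"
  proof (rule Bochner_Integration.integrable_bound[OF fi])
    show "(\<lambda>t. f t * complex_of_real (G t)) \<in> borel_measurable lborel" by measurable
    show "AE t in lborel. norm (f t * complex_of_real (G t)) \<le> norm (f t)"
    proof (rule AE_I2)
      fix t
      have "norm (f t * complex_of_real (G t)) = cmod (f t) * G t" using G0[of t] by (simp add: norm_mult)
      also have "\<dots> \<le> cmod (f t)" using G1[of t] by (intro mult_left_le) simp_all
      finally show "norm (f t * complex_of_real (G t)) \<le> norm (f t)" by simp
    qed
  qed
  have hGi: "integrable lborel (\<lambda>t. h t * complex_of_real (G t))"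
  proof (rule Bochner_Integration.integrable_bound[where f="\<lambda>t. B * G t"])
    show "integrable lborel (\<lambda>t. B * G t)" using Gi by (rule integrable_mult_right)
    show "(\<lambda>t. h t * complex_of_real (G t)) \<in> borel_measurable lborel" by measurable
    have B0: "B \<ge> 0" unfolding B_def by simp
    show "AE t in lborel. norm (h t * complex_of_real (G t)) \<le> norm (B * G t)"
      using G0 hb B0 by (auto simp: norm_mult abs_mult intro!: mult_right_mono)
  qed
  have ui: "integrable lborel u" unfolding u_def
    using Bochner_Integration.integrable_diff[OF fGi hGi] by (simp add: algebra_simps)
  have "AE t in lborel. u t = 0"
  proof (rule ft_unique[OF ui])
    fix t'
    define xi where "xi = - t' / (2*pi)"
    have txi: "t' * x = -2*pi*xi*x" for x unfolding xi_def by simp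
    have i1: "integrable lborel (\<lambda>x. cis (-2*pi*xi*x) * (f x * complex_of_real (G x)))"
      using fGi by (intro integrable_cis_mult) auto
    have i2: "integrable lborel (\<lambda>x. cis (-2*pi*xi*x) * (h x * complex_of_real (G x)))"
      using hGi by (intro integrable_cis_mult) auto
    have "(\<integral>x. cis (t' * x) * u x \<partial>lborel)
        = (\<integral>x. cis (-2*pi*xi*x) * (f x * complex_of_real (G x)) - cis (-2*pi*xi*x) * (h x * complex_of_real (G x)) \<partial>lborel)"
      unfolding txi u_def by (simp add: algebra_simps)
    also have "\<dots> = 0"
      using Bochner_Integration.integral_diff[OF i1 i2] key[of xi] by simp
    finally show "(\<integral>x. cis (t' * x) * u x \<partial>lborel) = 0" .
  qed
  then show ?thesis
  proof (rule eventually_mono)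
    fix x assume "u x = 0"
    then show "f x = ift (ftb f) x" using G0[of x] unfolding u_def h_def F_def by simp
  qed
qed

lemma plancherel:
  fixes f :: "real \<Rightarrow> complex"
  assumes fi: "integrable lborel f" and Fi: "integrable lborel (ftb f)"
  shows "(\<integral>\<^sup>+x. ennreal ((cmod (f x))^2) \<partial>lborel) = (\<integral>\<^sup>+w. ennreal ((cmod (ftb f w))^2) \<partial>lborel)"
    and "integrable lborel (\<lambda>x. (cmod (f x))^2)" and "integrable lborel (\<lambda>w. (cmod (ftb f w))^2)"
proof -
  have fm[measurable]: "f \<in> borel_measurable borel" using borel_measurable_integrable[OF fi] by simp
  define F where "F = ftb f"
  have Fm[measurable]: "F \<in> borel_measurable borel" unfolding F_def by measurable
  have Fi': "integrable lborel F" using Fi unfolding F_def .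
  define h where "h = ift F"
  have hm[measurable]: "h \<in> borel_measurable borel" unfolding h_def by measurable
  define B where "B = (\<integral>w. norm (F w) \<partial>lborel)"
  define A where "A = (\<integral>w. norm (f w) \<partial>lborel)"
  have A0: "A \<ge> 0" and B0: "B \<ge> 0" unfolding A_def B_def by simp_all
  have hb: "norm (h t) \<le> B" for t unfolding h_def B_def by (rule ift_bound[OF Fi'])
  have Fb: "norm (F w) \<le> A" for w unfolding F_def A_def by (rule ftb_bound[OF fi])
  have fh: "AE x in lborel. f x = h x" unfolding h_def F_def by (rule inversion[OF fi Fi])
  have f2i: "integrable lborel (\<lambda>x. (cmod (f x))^2)"
  proof (rule Bochner_Integration.integrable_bound[where f="\<lambda>x. B * norm (f x)"])
    show "integrable lborel (\<lambda>x. B * norm (f x))" using fi by (intro integrable_mult_right) simp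
    show "(\<lambda>x. (cmod (f x))^2) \<in> borel_measurable lborel" by measurable
    from fh show "AE x in lborel. norm ((cmod (f x))^2) \<le> norm (B * norm (f x))"
    proof (rule eventually_mono)
      fix x assume "f x = h x"
      then have "cmod (f x) \<le> B" using hb[of x] by simp
      then show "norm ((cmod (f x))^2) \<le> norm (B * norm (f x))"
        using B0 by (simp add: power2_eq_square abs_mult mult_right_mono)
    qed
  qed
  have F2i: "integrable lborel (\<lambda>x. (cmod (F x))^2)"
  proof (rule Bochner_Integration.integrable_bound[where f="\<lambda>x. A * norm (F x)"])
    show "integrable lborel (\<lambda>x. A * norm (F x))" using Fi' by (intro integrable_mult_right) simp
    show "(\<lambda>x. (cmod (F x))^2) \<in> borel_measurable lborel" by measurable
    show "AE x in lborel. norm ((cmod (F x))^2) \<le> norm (A * norm (F x))"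
      using Fb A0 by (auto simp: power2_eq_square abs_mult mult_right_mono)
  qed
  show "integrable lborel (\<lambda>x. (cmod (f x))^2)" by (rule f2i)
  show "integrable lborel (\<lambda>w. (cmod (ftb f w))^2)" using F2i unfolding F_def .
  have "complex_of_real (\<integral>x. (cmod (f x))^2 \<partial>lborel) = (\<integral>x. complex_of_real ((cmod (f x))^2) \<partial>lborel)"
    by (rule integral_complex_of_real[symmetric])
  also have "\<dots> = (\<integral>x. cnj (f x) * f x \<partial>lborel)"
    by (intro Bochner_Integration.integral_cong refl) (subst complex_norm_square, rule mult.commute)
  also have "\<dots> = (\<integral>x. cnj (f x) * h x \<partial>lborel)"
  proof (rule integral_cong_AE)
    show "(\<lambda>x. cnj (f x) * f x) \<in> borel_measurable lborel" by measurable
    show "(\<lambda>x. cnj (f x) * h x) \<in> borel_measurable lborel" by measurable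
    show "AE x in lborel. cnj (f x) * f x = cnj (f x) * h x" using fh by eventually_elim simp
  qed
  also have "\<dots> = (\<integral>t. (\<integral>w. cnj (f t) * (cis (2*pi*w*t) * F w) \<partial>lborel) \<partial>lborel)"
    unfolding h_def ift_def by simp
  also have "\<dots> = (\<integral>w. (\<integral>t. cnj (f t) * (cis (2*pi*w*t) * F w) \<partial>lborel) \<partial>lborel)"
  proof (rule fubini_swap_bound[where a="\<lambda>w. norm (F w)" and b="\<lambda>t. norm (f t)"])
    show "(\<lambda>z. cnj (f (snd z)) * (cis (2*pi*(fst z)*(snd z)) * F (fst z))) \<in> borel_measurable (lborel \<Otimes>\<^sub>M lborel)"
      by measurable
    show "integrable lborel (\<lambda>w. norm (F w))" using Fi' by simp
    show "integrable lborel (\<lambda>t. norm (f t))" using fi by simp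
    fix w t
    show "norm (cnj (f t) * (cis (2*pi*w*t) * F w)) \<le> norm (F w) * norm (f t)"
      by (simp add: norm_mult)
  qed
  also have "\<dots> = (\<integral>w. complex_of_real ((cmod (F w))^2) \<partial>lborel)"
  proof (intro Bochner_Integration.integral_cong refl)
    fix w
    have "(\<integral>t. cnj (f t) * (cis (2*pi*w*t) * F w) \<partial>lborel) = F w * (\<integral>t. cnj (cis (- 2 * pi * t * w) * f t) \<partial>lborel)"
    proof -
      have "(\<lambda>t. cnj (f t) * (cis (2*pi*w*t) * F w)) = (\<lambda>t. F w * cnj (cis (- 2 * pi * t * w) * f t))"
        by (simp add: fun_eq_iff cis_cnj mult_ac)
      then show ?thesis by (simp only: integral_mult_right_zero)
    qed
    also have "\<dots> = F w * cnj (F w)" unfolding F_def ftb_def by (simp only: Bochner_Integration.integral_cnj)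
    also have "\<dots> = complex_of_real ((cmod (F w))^2)" by (rule complex_norm_square[symmetric])
    finally show "(\<integral>t. cnj (f t) * (cis (2*pi*w*t) * F w) \<partial>lborel) = complex_of_real ((cmod (F w))^2)" .
  qed
  also have "\<dots> = complex_of_real (\<integral>w. (cmod (F w))^2 \<partial>lborel)" by (rule integral_complex_of_real)
  finally have eq: "(\<integral>x. (cmod (f x))^2 \<partial>lborel) = (\<integral>w. (cmod (F w))^2 \<partial>lborel)" by simp
  have "(\<integral>\<^sup>+x. ennreal ((cmod (f x))^2) \<partial>lborel) = ennreal (\<integral>x. (cmod (f x))^2 \<partial>lborel)"
    using f2i by (intro nn_integral_eq_integral) auto
  also have "\<dots> = ennreal (\<integral>w. (cmod (F w))^2 \<partial>lborel)" using eq by simp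
  also have "\<dots> = (\<integral>\<^sup>+w. ennreal ((cmod (F w))^2) \<partial>lborel)"
    using F2i by (intro nn_integral_eq_integral[symmetric]) auto
  finally show "(\<integral>\<^sup>+x. ennreal ((cmod (f x))^2) \<partial>lborel) = (\<integral>\<^sup>+w. ennreal ((cmod (ftb f w))^2) \<partial>lborel)"
    unfolding F_def .
qed



lemma inv_1_sq: "(\<integral>\<^sup>+x. ennreal (inverse (1 + (x::real)^2)) \<partial>lborel) = ennreal pi"
proof -
  have U: "einterval (-\<infinity>) \<infinity> = (UNIV::real set)" by (auto simp: einterval_def)
  have i: "integrable lborel (\<lambda>x::real. inverse (1 + x^2))"
    using integrable_inverse_1_plus_square unfolding set_integrable_def U by simp
  have v: "(\<integral>x. inverse (1 + (x::real)^2) \<partial>lborel) = pi"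
    using LBINT_inverse_1_plus_square unfolding interval_lebesgue_integral_def set_lebesgue_integral_def U by simp
  have "(\<integral>\<^sup>+x. ennreal (inverse (1 + (x::real)^2)) \<partial>lborel) = ennreal (\<integral>x. inverse (1 + (x::real)^2) \<partial>lborel)"
    by (rule nn_integral_eq_integral[OF i]) (intro AE_I2, simp add: add_nonneg_nonneg)
  then show ?thesis using v by simp
qed

lemma inv_sq:
  assumes a: "a > 0"
  shows "(\<integral>\<^sup>+x. ennreal (1 / (a + x^2)) \<partial>lborel) = ennreal (pi / sqrt a)"
proof -
  have sa: "sqrt a > 0" using a by simp
  have m: "(\<lambda>x. ennreal (1 / (a + x^2))) \<in> borel_measurable borel" by measurable
  have "(\<integral>\<^sup>+x. ennreal (1 / (a + x^2)) \<partial>lborel)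
      = ennreal \<bar>sqrt a\<bar> * (\<integral>\<^sup>+x. ennreal (1 / (a + (0 + sqrt a * x)^2)) \<partial>lborel)"
    using nn_integral_real_affine[OF m, of "sqrt a" 0] sa by simp
  also have "(\<lambda>x. ennreal (1 / (a + (0 + sqrt a * x)^2))) = (\<lambda>x. ennreal (1/a) * ennreal (inverse (1 + x^2)))"
  proof
    fix x :: real
    have p: "1 + x^2 > 0" using zero_le_power2[of x] by linarith
    have "1 / (a + (0 + sqrt a * x)^2) = (1/a) * inverse (1 + x^2)"
      using a p by (simp add: power_mult_distrib field_simps)
    then show "ennreal (1 / (a + (0 + sqrt a * x)^2)) = ennreal (1/a) * ennreal (inverse (1 + x^2))"
      using a p by (simp add: ennreal_mult[symmetric])
  qed
  also have "(\<integral>\<^sup>+x. ennreal (1/a) * ennreal (inverse (1 + x^2)) \<partial>lborel) = ennreal (1/a) * ennreal pi"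
    by (simp add: nn_integral_cmult inv_1_sq)
  also have "ennreal \<bar>sqrt a\<bar> * (ennreal (1/a) * ennreal pi) = ennreal (sqrt a * (1/a) * pi)"
  proof -
    have e0: "\<bar>sqrt a\<bar> = sqrt a" using a by simp
    have e1: "ennreal (1/a) * ennreal pi = ennreal ((1/a) * pi)" using a by (intro ennreal_mult[symmetric]) auto
    have e2: "ennreal (sqrt a) * ennreal ((1/a) * pi) = ennreal (sqrt a * ((1/a) * pi))" using a by (intro ennreal_mult[symmetric]) auto
    show ?thesis using e0 e1 e2 by (simp only: mult.assoc)
  qed
  also have "sqrt a * (1/a) * pi = pi / sqrt a"
  proof -
    have "sqrt a * sqrt a = a" using a by simp
    then show ?thesis using sa by (simp add: field_simps)
  qed
  finally show ?thesis .
qed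

lemma L1_bound_aux:
  fixes g :: "real \<Rightarrow> complex"
  assumes gm[measurable]: "g \<in> borel_measurable borel" and a: "a > 0"
  shows "(\<integral>\<^sup>+x. ennreal (cmod (g x)) \<partial>lborel)^2 \<le>
     (ennreal a * (\<integral>\<^sup>+x. ennreal ((cmod (g x))^2) \<partial>lborel) + (\<integral>\<^sup>+x. ennreal (\<bar>x\<bar>^2 * (cmod (g x))^2) \<partial>lborel))
       * ennreal (pi / sqrt a)"
proof -
  define p where "p x = ennreal (sqrt (a + x^2) * cmod (g x))" for x
  define q where "q x = ennreal (1 / sqrt (a + x^2))" for x
  have pos: "a + x^2 > 0" for x using a by (simp add: add_pos_nonneg)
  have pm[measurable]: "p \<in> borel_measurable lborel" unfolding p_def by measurable
  have qm[measurable]: "q \<in> borel_measurable lborel" unfolding q_def by measurable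
  have pq: "p x * q x = ennreal (cmod (g x))" for x
  proof -
    have s: "sqrt (a + x^2) > 0" using pos[of x] by simp
    have "p x * q x = ennreal (sqrt (a + x^2) * cmod (g x)) * ennreal (1 / sqrt (a + x^2))"
      unfolding p_def q_def ..
    also have "\<dots> = ennreal (sqrt (a + x^2) * cmod (g x) * (1 / sqrt (a + x^2)))"
      using s by (intro ennreal_mult[symmetric]) auto
    also have "sqrt (a + x^2) * cmod (g x) * (1 / sqrt (a + x^2)) = cmod (g x)" using s by simp
    finally show ?thesis .
  qed
  have p2: "p x ^ 2 = ennreal a * ennreal ((cmod (g x))^2) + ennreal (\<bar>x\<bar>^2 * (cmod (g x))^2)" for x
  proof -
    have s: "sqrt (a + x^2) ^ 2 = a + x^2" using pos[of x] by simp
    have "p x ^ 2 = ennreal ((sqrt (a + x^2) * cmod (g x))^2)"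
      unfolding p_def using pos[of x] by (intro ennreal_power) simp
    also have "(sqrt (a + x^2) * cmod (g x))^2 = a * (cmod (g x))^2 + \<bar>x\<bar>^2 * (cmod (g x))^2"
      using s by (simp add: power_mult_distrib algebra_simps)
    also have "ennreal (a * (cmod (g x))^2 + \<bar>x\<bar>^2 * (cmod (g x))^2)
        = ennreal a * ennreal ((cmod (g x))^2) + ennreal (\<bar>x\<bar>^2 * (cmod (g x))^2)"
      using a by (simp add: ennreal_mult)
    finally show ?thesis .
  qed
  have q2: "q x ^ 2 = ennreal (1 / (a + x^2))" for x
  proof -
    have "q x ^ 2 = ennreal ((1 / sqrt (a + x^2))^2)" unfolding q_def using pos[of x] by (simp add: ennreal_power)
    also have "(1 / sqrt (a + x^2))^2 = 1 / (a + x^2)" using pos[of x] by (simp add: power_divide)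
    finally show ?thesis .
  qed
  have "(\<integral>\<^sup>+x. p x * q x \<partial>lborel)^2 \<le> (\<integral>\<^sup>+x. p x ^ 2 \<partial>lborel) * (\<integral>\<^sup>+x. q x ^ 2 \<partial>lborel)"
    by (rule Cauchy_Schwarz_nn_integral) simp_all
  also have "(\<integral>\<^sup>+x. p x ^ 2 \<partial>lborel) = ennreal a * (\<integral>\<^sup>+x. ennreal ((cmod (g x))^2) \<partial>lborel) + (\<integral>\<^sup>+x. ennreal (\<bar>x\<bar>^2 * (cmod (g x))^2) \<partial>lborel)"
    unfolding p2 by (simp add: nn_integral_add nn_integral_cmult)
  also have "(\<integral>\<^sup>+x. q x ^ 2 \<partial>lborel) = ennreal (pi / sqrt a)"
    unfolding q2 by (rule inv_sq[OF a])
  finally show ?thesis unfolding pq .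
qed

lemma L1_bound:
  fixes g :: "real \<Rightarrow> complex"
  assumes gm[measurable]: "g \<in> borel_measurable borel"
  and A: "(\<integral>\<^sup>+x. ennreal ((cmod (g x))^2) \<partial>lborel) = ennreal A" and A0: "A \<ge> 0"
  and B: "(\<integral>\<^sup>+x. ennreal (\<bar>x\<bar>^2 * (cmod (g x))^2) \<partial>lborel) = ennreal B" and B0: "B \<ge> 0"
  shows "(\<integral>\<^sup>+x. ennreal (cmod (g x)) \<partial>lborel)^4 \<le> ennreal (4 * pi^2 * A * B)"
proof (cases "A = 0 \<or> B = 0")
  case True
  have "AE x in lborel. g x = 0"
    using True
  proof
    assume "A = 0"
    then have "(\<integral>\<^sup>+x. ennreal ((cmod (g x))^2) \<partial>lborel) = 0" using A by simp
    then have "AE x in lborel. ennreal ((cmod (g x))^2) = 0" by (subst (asm) nn_integral_0_iff_AE) auto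
    then show ?thesis by (rule eventually_mono) simp
  next
    assume "B = 0"
    then have "(\<integral>\<^sup>+x. ennreal (\<bar>x\<bar>^2 * (cmod (g x))^2) \<partial>lborel) = 0" using B by simp
    then have "AE x in lborel. ennreal (\<bar>x\<bar>^2 * (cmod (g x))^2) = 0" by (subst (asm) nn_integral_0_iff_AE) auto
    moreover have "AE x in lborel. x \<noteq> (0::real)" by (rule AE_lborel_singleton)
    ultimately show ?thesis
    proof eventually_elim
      case (elim x)
      have "x^2 * (cmod (g x))^2 \<le> 0" using elim(1) by (simp only: ennreal_eq_0_iff power2_abs)
      moreover have "x^2 * (cmod (g x))^2 \<ge> 0" by simp
      ultimately have "x^2 * (cmod (g x))^2 = 0" by linarith
      then show "g x = 0" using elim(2) by simp
    qed
  qed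
  then have "AE x in lborel. ennreal (cmod (g x)) = 0" by eventually_elim simp
  then have "(\<integral>\<^sup>+x. ennreal (cmod (g x)) \<partial>lborel) = (\<integral>\<^sup>+x. 0 \<partial>(lborel::real measure))"
    by (rule nn_integral_cong_AE)
  then show ?thesis by simp
next
  case False
  then have Ap: "A > 0" and Bp: "B > 0" using A0 B0 by auto
  define a where "a = B / A"
  have a0: "a > 0" unfolding a_def using Ap Bp by simp
  have "(\<integral>\<^sup>+x. ennreal (cmod (g x)) \<partial>lborel)^2 \<le> (ennreal a * ennreal A + ennreal B) * ennreal (pi / sqrt a)"
    using L1_bound_aux[OF gm a0] unfolding A B .
  also have "(ennreal a * ennreal A + ennreal B) * ennreal (pi / sqrt a) = ennreal ((a * A + B) * (pi / sqrt a))"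
  proof -
    have e1: "ennreal a * ennreal A = ennreal (a*A)" by (intro ennreal_mult[symmetric]) (use a0 A0 in auto)
    have e2: "ennreal (a*A) + ennreal B = ennreal (a*A + B)" by (intro ennreal_plus[symmetric]) (use a0 A0 B0 in auto)
    have e3: "ennreal (a*A+B) * ennreal (pi / sqrt a) = ennreal ((a*A+B) * (pi / sqrt a))"
      by (intro ennreal_mult[symmetric]) (use a0 A0 B0 in auto)
    show ?thesis using e1 e2 e3 by (simp only:)
  qed
  also have "(a * A + B) * (pi / sqrt a) = 2 * pi * sqrt A * sqrt B"
  proof -
    have aA: "a * A = B" unfolding a_def using Ap by simp
    have sqa: "sqrt a = sqrt B / sqrt A" unfolding a_def by (simp add: real_sqrt_divide)
    have "(a * A + B) * (pi / sqrt a) = (B + B) * (pi / (sqrt B / sqrt A))"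
      by (unfold aA sqa) (rule refl)
    also have "\<dots> = 2 * pi * sqrt A * (B / sqrt B)"
      using Ap Bp by (simp add: field_simps)
    also have "B / sqrt B = sqrt B" using B0 by (rule real_div_sqrt)
    finally show ?thesis .
  qed
  finally have sq: "(\<integral>\<^sup>+x. ennreal (cmod (g x)) \<partial>lborel)^2 \<le> ennreal (2 * pi * sqrt A * sqrt B)" .
  have "((\<integral>\<^sup>+x. ennreal (cmod (g x)) \<partial>lborel)^2)^2 \<le> (ennreal (2 * pi * sqrt A * sqrt B))^2"
    by (rule power_mono[OF sq]) simp
  also have "(ennreal (2 * pi * sqrt A * sqrt B))^2 = ennreal ((2 * pi * sqrt A * sqrt B)^2)"
    using A0 B0 by (simp add: ennreal_power)
  also have "(2 * pi * sqrt A * sqrt B)^2 = 4 * pi^2 * A * B"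
    using A0 B0 by (simp add: power_mult_distrib)
  finally show ?thesis by (simp add: power_mult[symmetric])
qed



lemma complex_completion_borel:
  fixes f :: "real \<Rightarrow> complex"
  assumes fm[measurable]: "f \<in> borel_measurable lebesgue"
  shows "\<exists>g \<in> borel_measurable borel. AE x in lborel. f x = g x"
proof -
  have "(\<lambda>x. Re (f x)) \<in> borel_measurable (completion lborel)" by measurable
  from completion_ex_borel_measurable_real[OF this] obtain gr
    where gr: "gr \<in> borel_measurable lborel" "AE x in lborel. Re (f x) = gr x" by blast
  have "(\<lambda>x. Im (f x)) \<in> borel_measurable (completion lborel)" by measurable
  from completion_ex_borel_measurable_real[OF this] obtain gi
    where gi: "gi \<in> borel_measurable lborel" "AE x in lborel. Im (f x) = gi x" by blast
  have [measurable]: "gr \<in> borel_measurable borel" "gi \<in> borel_measurable borel" using gr(1) gi(1) by simp_all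
  define g where "g x = complex_of_real (gr x) + \<i> * complex_of_real (gi x)" for x
  have "g \<in> borel_measurable borel" unfolding g_def by measurable
  moreover have "AE x in lborel. f x = g x"
    using gr(2) gi(2) by eventually_elim (simp add: g_def complex_eq_iff)
  ultimately show ?thesis by blast
qed

lemma final_real:
  fixes p1 p2 n mT mO a b d1 d2 :: real
  assumes p: "0 \<le> p1" "0 \<le> p2" and n: "n > 0" and m: "mT > 0" "mO > 0" and ab: "a \<ge> 0" "b \<ge> 0"
    and d: "d1 \<ge> 0" "d2 \<ge> 0"
    and h1: "p1 * n \<le> b^2 * mT" and h2: "p2 * n \<le> a^2 * mO"
    and h3: "a^4 \<le> 4*pi^2*n*d1" and h4: "b^4 \<le> 4*pi^2*n*d2"
  shows "(p1 * p2 / (4 * pi^2 * mT * mO) * n)^2 \<le> d1 * d2"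
proof -
  have e1: "p1 * p2 * n^2 \<le> (b^2 * mT) * (a^2 * mO)"
  proof -
    have "(p1 * n) * (p2 * n) \<le> (b^2 * mT) * (a^2 * mO)"
      by (intro mult_mono h1 h2) (use p n m in auto)
    then show ?thesis by (simp add: power2_eq_square mult_ac)
  qed
  have e2: "(p1 * p2 * n^2)^2 \<le> ((b^2 * mT) * (a^2 * mO))^2"
    by (rule power_mono[OF e1]) (use p n in simp)
  have e3: "((b^2 * mT) * (a^2 * mO))^2 = (a^4 * b^4) * (mT^2 * mO^2)"
    by algebra
  have e4: "(a^4 * b^4) * (mT^2 * mO^2) \<le> ((4*pi^2*n*d1) * (4*pi^2*n*d2)) * (mT^2 * mO^2)"
    by (intro mult_right_mono mult_mono h3 h4) (use ab n d in auto)
  have e5: "(p1 * p2 * n^2)^2 = (p1 * p2 * n)^2 * n^2" by algebra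
  have e6: "((4*pi^2*n*d1) * (4*pi^2*n*d2)) * (mT^2 * mO^2) = (d1 * d2 * (4 * pi^2 * mT * mO)^2) * n^2" by algebra
  have "(p1 * p2 * n)^2 * n^2 \<le> (d1 * d2 * (4 * pi^2 * mT * mO)^2) * n^2"
    using e2 e4 unfolding e3 e5 e6 by linarith
  then have le: "(p1 * p2 * n)^2 \<le> d1 * d2 * (4 * pi^2 * mT * mO)^2"
    by (rule mult_right_le_imp_le) (use n in simp)
  have Y: "(4 * pi^2 * mT * mO)^2 > 0" using m by simp
  have "(p1 * p2 / (4 * pi^2 * mT * mO) * n)^2 = (p1 * p2 * n)^2 / (4 * pi^2 * mT * mO)^2"
    by (simp add: power_divide power_mult_distrib)
  also have "\<dots> \<le> d1 * d2" using le Y by (simp add: divide_le_eq)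
  finally show ?thesis .
qed

lemma ennreal_split_indicator:
  fixes U :: "real set" and u :: "real \<Rightarrow> ennreal"
  assumes U[measurable]: "U \<in> sets lebesgue" and um[measurable]: "u \<in> borel_measurable lebesgue"
  shows "(\<integral>\<^sup>+x. u x \<partial>lebesgue) = (\<integral>\<^sup>+x. indicator U x * u x \<partial>lebesgue) + (\<integral>\<^sup>+x. indicator (UNIV - U) x * u x \<partial>lebesgue)"
proof -
  have "(\<integral>\<^sup>+x. u x \<partial>lebesgue) = (\<integral>\<^sup>+x. indicator U x * u x + indicator (UNIV - U) x * u x \<partial>lebesgue)"
    by (intro nn_integral_cong) (simp split: split_indicator)
  also have "\<dots> = (\<integral>\<^sup>+x. indicator U x * u x \<partial>lebesgue) + (\<integral>\<^sup>+x. indicator (UNIV - U) x * u x \<partial>lebesgue)"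
    by (rule nn_integral_add) measurable
  finally show ?thesis .
qed

lemma conc_ineq:
  fixes U :: "real set" and f :: "real \<Rightarrow> complex" and \<epsilon> bnd n mU :: real
  assumes U[measurable]: "U \<in> sets lebesgue" and fm[measurable]: "f \<in> borel_measurable lebesgue"
    and conc: "eps_concentrated \<epsilon> U f"
    and bd: "AE x in lebesgue. cmod (f x) \<le> bnd"
    and N: "L2_norm_sq f = ennreal n" and n0: "n \<ge> 0"
    and mU: "emeasure lebesgue U = ennreal mU" and mU0: "mU \<ge> 0"
  shows "(1 - \<epsilon>^2) * n \<le> bnd^2 * mU"
proof -
  have e0: "\<epsilon> \<ge> 0" using conc unfolding eps_concentrated_def by simp
  have c: "(\<integral>\<^sup>+x. indicator (UNIV - U) x * ennreal ((cmod (f x))\<^sup>2) \<partial>lebesgue) \<le> ennreal (\<epsilon>^2) * ennreal n"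
    using conc unfolding eps_concentrated_def N by blast
  have "(\<integral>\<^sup>+x. indicator U x * ennreal ((cmod (f x))\<^sup>2) \<partial>lebesgue) \<le> (\<integral>\<^sup>+x. ennreal (bnd^2) * indicator U x \<partial>lebesgue)"
  proof (rule nn_integral_mono_AE)
    from bd show "AE x in lebesgue. indicator U x * ennreal ((cmod (f x))\<^sup>2) \<le> ennreal (bnd^2) * indicator U x"
    proof (rule eventually_mono)
      fix x assume "cmod (f x) \<le> bnd"
      then have "(cmod (f x))^2 \<le> bnd^2" by (intro power_mono) auto
      then show "indicator U x * ennreal ((cmod (f x))\<^sup>2) \<le> ennreal (bnd^2) * indicator U x"
        by (simp split: split_indicator)
    qed
  qed
  also have "\<dots> = ennreal (bnd^2) * ennreal mU" using mU U by (simp add: nn_integral_cmult_indicator)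
  finally have i: "(\<integral>\<^sup>+x. indicator U x * ennreal ((cmod (f x))\<^sup>2) \<partial>lebesgue) \<le> ennreal (bnd^2) * ennreal mU" .
  have "ennreal n = L2_norm_sq f" using N by simp
  also have "\<dots> = (\<integral>\<^sup>+x. indicator U x * ennreal ((cmod (f x))\<^sup>2) \<partial>lebesgue) + (\<integral>\<^sup>+x. indicator (UNIV - U) x * ennreal ((cmod (f x))\<^sup>2) \<partial>lebesgue)"
    unfolding L2_norm_sq_def by (rule ennreal_split_indicator) measurable
  also have "\<dots> \<le> ennreal (bnd^2) * ennreal mU + ennreal (\<epsilon>^2) * ennreal n"
    by (rule add_mono[OF i c])
  also have "\<dots> = ennreal (bnd^2 * mU + \<epsilon>^2 * n)"
    using mU0 n0 by (simp add: ennreal_mult)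
  finally have le: "ennreal n \<le> ennreal (bnd^2 * mU + \<epsilon>^2 * n)" .
  have "0 \<le> bnd^2 * mU + \<epsilon>^2 * n" using mU0 n0 by simp
  then have "n \<le> bnd^2 * mU + \<epsilon>^2 * n" using le by simp
  then show ?thesis by (simp add: algebra_simps)
qed

theorem mainTheorem10:
  fixes T \<Omega> :: "real set" and f :: "real \<Rightarrow> complex" and \<epsilon>T \<epsilon>\<Omega> :: real
  assumes T_meas: "T \<in> sets lebesgue" and \<Omega>_meas: "\<Omega> \<in> sets lebesgue"
    and pos: "0 < emeasure lebesgue T * emeasure lebesgue \<Omega>"
    and fin: "emeasure lebesgue T * emeasure lebesgue \<Omega> < \<infinity>"
    and f_L1: "integrable lebesgue f"
    and fhat_L1: "integrable lebesgue (fourier f)"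
    and f_nonzero: "\<not> (AE x in lebesgue. f x = 0)"
    and epsT: "0 \<le> \<epsilon>T" "\<epsilon>T \<le> 1"
    and eps\<Omega>: "0 \<le> \<epsilon>\<Omega>" "\<epsilon>\<Omega> \<le> 1"
    and eps_sum: "\<epsilon>T + \<epsilon>\<Omega> \<le> 1"
    and concT: "eps_concentrated \<epsilon>T T f"
    and conc\<Omega>: "eps_concentrated \<epsilon>\<Omega> \<Omega> (fourier f)"
  shows "dispersion_sq f * dispersion_sq (fourier f)
           \<ge> (ennreal ((1 - \<epsilon>T\<^sup>2) * (1 - \<epsilon>\<Omega>\<^sup>2)
                  / (4 * pi\<^sup>2 * measure lebesgue T * measure lebesgue \<Omega>)) * L2_norm_sq f)\<^sup>2"
proof -
  have fm[measurable]: "f \<in> borel_measurable lebesgue" using borel_measurable_integrable[OF f_L1] .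
  obtain g where gm[measurable]: "g \<in> borel_measurable borel" and fg: "AE x in lborel. f x = g x"
    using complex_completion_borel[OF fm] by blast
  have fgL: "AE x in lebesgue. f x = g x" using fg by (rule AE_completion)
  have gmL: "g \<in> borel_measurable lborel" using gm by simp
  have gmLL: "g \<in> borel_measurable lebesgue" using gmL by (rule measurable_completion)
  have "integrable lebesgue g"
    using f_L1 gmLL fgL by (rule integrable_cong_AE_imp)
  then have gi: "integrable lborel g" using integrable_completion[OF gmL] by simp
  define F where "F = ftb g"
  have Fm[measurable]: "F \<in> borel_measurable borel" unfolding F_def by measurable
  have FmL: "F \<in> borel_measurable lborel" using Fm by simp
  have Feq: "fourier f = F"
  proof
    fix w
    have m1: "(\<lambda>x. cis (- 2 * pi * x * w) * g x) \<in> borel_measurable lborel" by measurable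
    have c1[measurable]: "(\<lambda>x. cis (- 2 * pi * x * w)) \<in> borel_measurable lebesgue"
      by (rule measurable_completion) measurable
    have "fourier f w = integral\<^sup>L lebesgue (\<lambda>x. cis (- 2 * pi * x * w) * g x)"
      unfolding fourier_def
    proof (rule integral_cong_AE)
      show "(\<lambda>x. cis (- 2 * pi * x * w) * f x) \<in> borel_measurable lebesgue" by measurable
      show "(\<lambda>x. cis (- 2 * pi * x * w) * g x) \<in> borel_measurable lebesgue"
        using m1 by (rule measurable_completion)
      show "AE x in lebesgue. cis (- 2 * pi * x * w) * f x = cis (- 2 * pi * x * w) * g x"
        using fgL by eventually_elim simp
    qed
    also have "\<dots> = integral\<^sup>L lborel (\<lambda>x. cis (- 2 * pi * x * w) * g x)"
      by (rule integral_completion[OF m1])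
    finally show "fourier f w = F w" unfolding F_def ftb_def .
  qed
  have Fi: "integrable lborel F" using fhat_L1 integrable_completion[OF FmL] unfolding Feq by simp
  have Fi': "integrable lborel (ftb g)" using Fi unfolding F_def .
  note planch = plancherel[OF gi Fi']
  define n where "n = (\<integral>x. (cmod (g x))^2 \<partial>lborel)"
  have n0: "n \<ge> 0" unfolding n_def by simp
  have Ng: "(\<integral>\<^sup>+x. ennreal ((cmod (g x))^2) \<partial>lborel) = ennreal n"
    unfolding n_def using planch(2) by (intro nn_integral_eq_integral) auto
  have NF: "(\<integral>\<^sup>+x. ennreal ((cmod (F x))^2) \<partial>lborel) = ennreal n"
    using planch(1) Ng unfolding F_def by simp
  have Nf: "L2_norm_sq f = ennreal n"
  proof -
    have "L2_norm_sq f = (\<integral>\<^sup>+x. ennreal ((cmod (g x))^2) \<partial>lebesgue)"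
      unfolding L2_norm_sq_def by (rule nn_integral_cong_AE) (use fgL in auto)
    also have "\<dots> = ennreal n" using Ng by (simp add: nn_integral_completion)
    finally show ?thesis .
  qed
  have NFf: "L2_norm_sq (fourier f) = ennreal n"
    unfolding L2_norm_sq_def Feq using NF by (simp add: nn_integral_completion)
  have D1: "dispersion_sq f = (\<integral>\<^sup>+x. ennreal (\<bar>x\<bar>^2 * (cmod (g x))^2) \<partial>lborel)"
  proof -
    have "dispersion_sq f = (\<integral>\<^sup>+x. ennreal (\<bar>x\<bar>^2 * (cmod (g x))^2) \<partial>lebesgue)"
      unfolding dispersion_sq_def by (rule nn_integral_cong_AE) (use fgL in auto)
    then show ?thesis by (simp add: nn_integral_completion)
  qed
  have D2: "dispersion_sq (fourier f) = (\<integral>\<^sup>+x. ennreal (\<bar>x\<bar>^2 * (cmod (F x))^2) \<partial>lborel)"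
    unfolding dispersion_sq_def Feq by (simp add: nn_integral_completion)
  have npos: "n > 0"
  proof (rule ccontr)
    assume "\<not> n > 0"
    then have "n = 0" using n0 by simp
    then have "AE x in lborel. (cmod (g x))^2 = 0"
      using integral_nonneg_eq_0_iff_AE[OF planch(2)] unfolding n_def by simp
    then have "AE x in lborel. f x = 0" using fg by eventually_elim simp
    then have "AE x in lebesgue. f x = 0" by (rule AE_completion)
    then show False using f_nonzero by simp
  qed
  define a where "a = (\<integral>x. norm (g x) \<partial>lborel)"
  define b where "b = (\<integral>x. norm (F x) \<partial>lborel)"
  have a0: "a \<ge> 0" and b0: "b \<ge> 0" unfolding a_def b_def by simp_all
  have Ag: "(\<integral>\<^sup>+x. ennreal (cmod (g x)) \<partial>lborel) = ennreal a"
    unfolding a_def using gi by (intro nn_integral_eq_integral) auto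
  have AF: "(\<integral>\<^sup>+x. ennreal (cmod (F x)) \<partial>lborel) = ennreal b"
    unfolding b_def using Fi by (intro nn_integral_eq_integral) auto
  have fbound: "AE x in lebesgue. cmod (f x) \<le> b"
  proof -
    have "AE x in lborel. cmod (f x) \<le> b"
      using fg inversion[OF gi Fi'] 
    proof eventually_elim
      case (elim x)
      then have "f x = ift F x" unfolding F_def by simp
      then show ?case using ift_bound[OF Fi, of x] unfolding b_def by simp
    qed
    then show ?thesis by (rule AE_completion)
  qed
  have Fbound: "AE x in lebesgue. cmod (fourier f x) \<le> a"
    unfolding Feq F_def a_def using ftb_bound[OF gi] by simp
  have T0: "emeasure lebesgue T \<noteq> 0" and O0: "emeasure lebesgue \<Omega> \<noteq> 0" using pos by auto
  have Tf: "emeasure lebesgue T \<noteq> \<infinity>" and Of: "emeasure lebesgue \<Omega> \<noteq> \<infinity>"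
    using fin T0 O0 by (auto simp: ennreal_mult_less_top top_unique less_top)
  define mT where "mT = measure lebesgue T"
  define mO where "mO = measure lebesgue \<Omega>"
  have mTe: "emeasure lebesgue T = ennreal mT" unfolding mT_def using Tf by (simp add: emeasure_eq_ennreal_measure)
  have mOe: "emeasure lebesgue \<Omega> = ennreal mO" unfolding mO_def using Of by (simp add: emeasure_eq_ennreal_measure)
  have mT0: "mT > 0" using mTe T0 measure_nonneg[of lebesgue T] unfolding mT_def by (auto simp: less_le)
  have mO0: "mO > 0" using mOe O0 measure_nonneg[of lebesgue \<Omega>] unfolding mO_def by (auto simp: less_le)
  have FmLL: "fourier f \<in> borel_measurable lebesgue" unfolding Feq using FmL by (rule measurable_completion)
  have iT: "(1 - \<epsilon>T^2) * n \<le> b^2 * mT"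
    by (rule conc_ineq[OF T_meas fm concT fbound Nf n0 mTe]) (use mT0 in simp)
  have iO: "(1 - \<epsilon>\<Omega>^2) * n \<le> a^2 * mO"
    by (rule conc_ineq[OF \<Omega>_meas FmLL conc\<Omega> Fbound NFf n0 mOe]) (use mO0 in simp)
  define P where "P = (1 - \<epsilon>T\<^sup>2) * (1 - \<epsilon>\<Omega>\<^sup>2)"
  have p1: "1 - \<epsilon>T^2 \<ge> 0" using epsT by (simp add: power_le_one)
  have p2: "1 - \<epsilon>\<Omega>^2 \<ge> 0" using eps\<Omega> by (simp add: power_le_one)
  define C where "C = P / (4 * pi\<^sup>2 * mT * mO)"
  have C0: "C \<ge> 0" unfolding C_def P_def using p1 p2 mT0 mO0 by simp
  have rhs: "(ennreal C * L2_norm_sq f)\<^sup>2 = ennreal ((C * n)^2)"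
  proof -
    have e1: "ennreal C * ennreal n = ennreal (C*n)" by (intro ennreal_mult[symmetric]) (use C0 n0 in auto)
    have e2: "(ennreal (C*n))^2 = ennreal ((C*n)^2)" by (rule ennreal_power) (use C0 n0 in simp)
    show ?thesis unfolding Nf e1 e2 ..
  qed
  show ?thesis
  proof (cases "P = 0")
    case True
    have Ceq: "(1 - \<epsilon>T\<^sup>2) * (1 - \<epsilon>\<Omega>\<^sup>2) / (4 * pi\<^sup>2 * measure lebesgue T * measure lebesgue \<Omega>) = C"
      unfolding C_def P_def mT_def mO_def ..
    have "C = 0" unfolding C_def using True by simp
    then show ?thesis unfolding Ceq by simp
  next
    case False
    then have q1: "1 - \<epsilon>T^2 > 0" and q2: "1 - \<epsilon>\<Omega>^2 > 0" using p1 p2 unfolding P_def by auto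
    have bpos: "b > 0"
    proof (rule ccontr)
      assume "\<not> b > 0" then have "b = 0" using b0 by simp
      moreover have "(1 - \<epsilon>T^2) * n > 0" using q1 npos by simp
      ultimately show False using iT by simp
    qed
    have apos: "a > 0"
    proof (rule ccontr)
      assume "\<not> a > 0" then have "a = 0" using a0 by simp
      moreover have "(1 - \<epsilon>\<Omega>^2) * n > 0" using q2 npos by simp
      ultimately show False using iO by simp
    qed
    have ne1: "dispersion_sq f \<noteq> 0"
    proof
      assume z: "dispersion_sq f = 0"
      have B1: "(\<integral>\<^sup>+x. ennreal (\<bar>x\<bar>^2 * (cmod (g x))^2) \<partial>lborel) = ennreal 0" using D1 z by simp
      have "(\<integral>\<^sup>+x. ennreal (cmod (g x)) \<partial>lborel)^4 \<le> ennreal (4 * pi^2 * n * 0)"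
        by (rule L1_bound[OF gm Ng n0 B1]) simp
      then have "ennreal (a ^ 4) \<le> 0" using Ag a0 by (simp add: ennreal_power)
      then show False using apos by simp
    qed
    have ne2: "dispersion_sq (fourier f) \<noteq> 0"
    proof
      assume z: "dispersion_sq (fourier f) = 0"
      have B1: "(\<integral>\<^sup>+x. ennreal (\<bar>x\<bar>^2 * (cmod (F x))^2) \<partial>lborel) = ennreal 0" using D2 z by simp
      have "(\<integral>\<^sup>+x. ennreal (cmod (F x)) \<partial>lborel)^4 \<le> ennreal (4 * pi^2 * n * 0)"
        by (rule L1_bound[OF Fm NF n0 B1]) simp
      then have "ennreal (b ^ 4) \<le> 0" using AF b0 by (simp add: ennreal_power)
      then show False using bpos by simp
    qed
    have Ceq: "(1 - \<epsilon>T\<^sup>2) * (1 - \<epsilon>\<Omega>\<^sup>2) / (4 * pi\<^sup>2 * measure lebesgue T * measure lebesgue \<Omega>) = C"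
      unfolding C_def P_def mT_def mO_def ..
    show ?thesis
    proof (cases "dispersion_sq f = \<infinity> \<or> dispersion_sq (fourier f) = \<infinity>")
      case True
      then have "dispersion_sq f * dispersion_sq (fourier f) = \<infinity>"
        using ne1 ne2 by (auto simp: ennreal_mult_eq_top_iff)
      then show ?thesis by simp
    next
      case False
      define d1 where "d1 = enn2real (dispersion_sq f)"
      define d2 where "d2 = enn2real (dispersion_sq (fourier f))"
      have D1e: "dispersion_sq f = ennreal d1" unfolding d1_def using False by (simp add: ennreal_enn2real_if)
      have D2e: "dispersion_sq (fourier f) = ennreal d2" unfolding d2_def using False by (simp add: ennreal_enn2real_if)
      have d10: "d1 \<ge> 0" and d20: "d2 \<ge> 0" unfolding d1_def d2_def by simp_all
      have B1: "(\<integral>\<^sup>+x. ennreal (\<bar>x\<bar>^2 * (cmod (g x))^2) \<partial>lborel) = ennreal d1" using D1 D1e by simp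
      have B2: "(\<integral>\<^sup>+x. ennreal (\<bar>x\<bar>^2 * (cmod (F x))^2) \<partial>lborel) = ennreal d2" using D2 D2e by simp
      have "ennreal (a ^ 4) \<le> ennreal (4 * pi^2 * n * d1)"
        using L1_bound[OF gm Ng n0 B1 d10] Ag a0 by (simp add: ennreal_power)
      moreover have "4 * pi^2 * n * d1 \<ge> 0" using n0 d10 by simp
      ultimately have h3: "a^4 \<le> 4 * pi^2 * n * d1" by simp
      have "ennreal (b ^ 4) \<le> ennreal (4 * pi^2 * n * d2)"
        using L1_bound[OF Fm NF n0 B2 d20] AF b0 by (simp add: ennreal_power)
      moreover have "4 * pi^2 * n * d2 \<ge> 0" using n0 d20 by simp
      ultimately have h4: "b^4 \<le> 4 * pi^2 * n * d2" by simp
      have fr: "(C * n)^2 \<le> d1 * d2"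
        using final_real[OF p1 p2 npos mT0 mO0 a0 b0 d10 d20 iT iO h3 h4] unfolding C_def P_def .
      have "(ennreal C * L2_norm_sq f)\<^sup>2 = ennreal ((C * n)^2)" by (rule rhs)
      also have "\<dots> \<le> ennreal (d1 * d2)" using fr d10 d20 by simp
      also have "\<dots> = dispersion_sq f * dispersion_sq (fourier f)" using D1e D2e d10 d20 by (simp add: ennreal_mult)
      finally show ?thesis unfolding Ceq .
    qed
  qed
qed


end
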